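(* If $G$ is a finite group, then there is a closed subgroup $H_0$ of $G^\omega$ such that for every closed subgroup $H$ of $G^\omega$ there is a continuous group homomorphism $\varphi:G^\omega\to G^\omega$ with $\varphi^{-1}(H_0)=H$.
   Context: $G$ carries the discrete topology and $G^\omega$ the product topology. *)

theory Defs
  imports "HOL-Analysis.Analysis" "HOL-Algebra.Product_Groups"
begin

definition omega_power_group :: "('a, 'b) monoid_scheme \<Rightarrow> (nat \<Rightarrow> 'a) monoid" where
  "omega_power_group G = product_group (UNIV :: nat set) (\<lambda>_. G)"

definition omega_power_topology :: "('a, 'b) monoid_scheme \<Rightarrow> (nat \<Rightarrow> 'a) topology" where
  "omega_power_topology G = product_topology (\<lambda>_. discrete_topology (carrier G)) (UNIV :: nat set)"

end

theory Submission
  imports Defs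
begin

definition sel :: "'a \<Rightarrow> (nat \<Rightarrow> nat option) \<Rightarrow> (nat \<Rightarrow> 'a) \<Rightarrow> nat \<Rightarrow> 'a" where
  "sel e s x = (\<lambda>i. case s i of None \<Rightarrow> e | Some j \<Rightarrow> x j)"

lemma carrier_omega: "carrier (omega_power_group G) = {x. \<forall>i. x i \<in> carrier G}"
  by (auto simp: omega_power_group_def PiE_def extensional_def)

lemma mult_omega: "x \<otimes>\<^bsub>omega_power_group G\<^esub> y = (\<lambda>i. x i \<otimes>\<^bsub>G\<^esub> y i)"
  by (simp add: omega_power_group_def restrict_def)

lemma one_omega: "\<one>\<^bsub>omega_power_group G\<^esub> = (\<lambda>i. \<one>\<^bsub>G\<^esub>)"
  by (simp add: omega_power_group_def restrict_def)

lemma group_omega: "group G \<Longrightarrow> group (omega_power_group G)"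
  by (simp add: omega_power_group_def)

lemma topspace_omega: "topspace (omega_power_topology G) = carrier (omega_power_group G)"
  by (simp add: omega_power_topology_def omega_power_group_def)

lemma sel_hom:
  assumes "group G"
  shows "sel \<one>\<^bsub>G\<^esub> s \<in> hom (omega_power_group G) (omega_power_group G)"
proof -
  interpret group G by fact
  show ?thesis
    by (rule homI) (auto simp: carrier_omega mult_omega sel_def split: option.splits)
qed

lemma sel_group_hom:
  assumes "group G"
  shows "group_hom (omega_power_group G) (omega_power_group G) (sel \<one>\<^bsub>G\<^esub> s)"
  using assms group_omega[OF assms] sel_hom[OF assms]
  by (simp add: group_hom_def group_hom_axioms_def)

lemma sel_cont:
  assumes "group G"
  shows "continuous_map (omega_power_topology G) (omega_power_topology G) (sel \<one>\<^bsub>G\<^esub> s)"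
  unfolding omega_power_topology_def continuous_map_componentwise_UNIV
proof
  fix k
  show "continuous_map (product_topology (\<lambda>_. discrete_topology (carrier G)) UNIV)
          (discrete_topology (carrier G)) (\<lambda>x. sel \<one>\<^bsub>G\<^esub> s x k)"
  proof (cases "s k")
    case None
    then show ?thesis using monoid.one_closed[OF group.is_monoid[OF assms]]
      by (simp add: sel_def)
  next
    case (Some j)
    then show ?thesis
      using continuous_map_product_projection[of j UNIV "\<lambda>_. discrete_topology (carrier G)"]
      by (simp add: sel_def)
  qed
qed

lemma preimage_subgroup:
  assumes "group_hom A A h" "subgroup K A"
  shows "subgroup {x \<in> carrier A. h x \<in> K} A"
proof -
  interpret group_hom A A h by fact
  interpret K: subgroup K A by fact
  show ?thesis
  proof
    fix x y assume "x \<in> {x \<in> carrier A. h x \<in> K}" "y \<in> {x \<in> carrier A. h x \<in> K}"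
    then show "x \<otimes>\<^bsub>A\<^esub> y \<in> {x \<in> carrier A. h x \<in> K}" by auto
  next
    show "\<one>\<^bsub>A\<^esub> \<in> {x \<in> carrier A. h x \<in> K}" by auto
  next
    fix x assume "x \<in> {x \<in> carrier A. h x \<in> K}"
    then show "inv\<^bsub>A\<^esub> x \<in> {x \<in> carrier A. h x \<in> K}" by auto
  qed auto
qed

lemma closed_approx:
  assumes "closedin (omega_power_topology G) H" "x \<in> carrier (omega_power_group G)"
    and "\<And>n. \<exists>h\<in>H. \<forall>i<n. h i = x i"
  shows "x \<in> H"
proof (rule ccontr)
  assume "x \<notin> H"
  let ?T = "omega_power_topology G"
  have op: "openin ?T (topspace ?T - H)" using assms(1) by blast
  have "x \<in> topspace ?T - H" using assms(2) \<open>x \<notin> H\<close> by (simp add: topspace_omega)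
  from product_topology_open_contains_basis[OF op[unfolded omega_power_topology_def] this[unfolded omega_power_topology_def]]
  obtain X where X: "x \<in> (\<Pi>\<^sub>E i\<in>UNIV. X i)" "\<And>i. openin (discrete_topology (carrier G)) (X i)"
    "finite {i. X i \<noteq> topspace (discrete_topology (carrier G))}"
    "(\<Pi>\<^sub>E i\<in>UNIV. X i) \<subseteq> topspace ?T - H"
    by (auto simp: omega_power_topology_def)
  obtain n where n: "\<And>i. i \<in> {i. X i \<noteq> carrier G} \<Longrightarrow> i < n"
    using X(3) finite_nat_set_iff_bounded by auto
  obtain h where h: "h \<in> H" "\<And>i. i < n \<Longrightarrow> h i = x i" using assms(3) by blast
  have hc: "h \<in> carrier (omega_power_group G)"
    using h(1) closedin_subset[OF assms(1)] by (auto simp: topspace_omega)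
  have "h \<in> (\<Pi>\<^sub>E i\<in>UNIV. X i)"
  proof -
    have "h i \<in> X i" for i
    proof (cases "i < n")
      case True then show ?thesis using h(2) X(1) by auto
    next
      case False then have "X i = carrier G" using n by force
      then show ?thesis using hc by (simp add: carrier_omega)
    qed
    then show ?thesis by auto
  qed
  then show False using X(4) h(1) by auto
qed


theorem mainTheorem18:
  fixes G :: "('a, 'b) monoid_scheme"
  assumes "group G" and "finite (carrier G)"
  shows "\<exists>H0. subgroup H0 (omega_power_group G) \<and> closedin (omega_power_topology G) H0 \<and>
           (\<forall>H. subgroup H (omega_power_group G) \<and> closedin (omega_power_topology G) H \<longrightarrow>
              (\<exists>\<phi>. \<phi> \<in> hom (omega_power_group G) (omega_power_group G) \<and>
                   continuous_map (omega_power_topology G) (omega_power_topology G) \<phi> \<and>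
                   {x \<in> carrier (omega_power_group G). \<phi> x \<in> H0} = H))"
proof -
  interpret G: group G by fact
  let ?W = "omega_power_group G"
  let ?T = "omega_power_topology G"
  let ?C = "carrier ?W"
  have gW: "group ?W" using group_omega[OF assms(1)] .
  define t where "t n = sel \<one>\<^bsub>G\<^esub> (\<lambda>i. if i < n then Some i else None)" for n
  define b where "b k n = sel \<one>\<^bsub>G\<^esub> (\<lambda>i. if i < n then Some (prod_encode (k,i)) else None)" for k n
  define P where "P = (SIGMA n:UNIV. Pow (t n ` ?C))"
  have fin: "finite (t n ` ?C)" for n
  proof -
    let ?F = "\<lambda>f i. if i < n then f i else \<one>\<^bsub>G\<^esub>"
    have "t n ` ?C \<subseteq> ?F ` (PiE {..<n} (\<lambda>_. carrier G))"
    proof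
      fix y assume "y \<in> t n ` ?C"
      then obtain x where x: "x \<in> ?C" "y = t n x" by auto
      have "y = ?F (restrict x {..<n})" using x(2) by (auto simp: t_def sel_def)
      moreover have "restrict x {..<n} \<in> PiE {..<n} (\<lambda>_. carrier G)" using x(1) by (auto simp: carrier_omega)
      ultimately show "y \<in> ?F ` (PiE {..<n} (\<lambda>_. carrier G))" by blast
    qed
    moreover have "finite (?F ` (PiE {..<n} (\<lambda>_. carrier G)))"
      using assms(2) by (simp add: finite_PiE)
    ultimately show ?thesis by (rule finite_subset)
  qed
  have cP: "countable P" unfolding P_def
    by (rule countable_SIGMA) (auto intro: countable_finite simp: fin)
  have neP: "P \<noteq> {}" unfolding P_def by auto
  define e where "e = from_nat_into P"
  have rng: "range e = P" unfolding e_def using range_from_nat_into[OF neP cP] .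
  define H0 where "H0 = {y \<in> ?C. \<forall>k. subgroup (snd (e k)) ?W \<longrightarrow> b k (fst (e k)) y \<in> snd (e k)}"
  define S where "S k = (if subgroup (snd (e k)) ?W then {y \<in> ?C. b k (fst (e k)) y \<in> snd (e k)} else ?C)" for k
  have SC: "S k \<subseteq> ?C" for k unfolding S_def by auto
  have H0S: "H0 = \<Inter> (range S)"
  proof (intro subset_antisym subsetI)
    fix x assume x: "x \<in> H0"
    have xc: "x \<in> ?C" using x unfolding H0_def by blast
    have xk: "b k (fst (e k)) x \<in> snd (e k)" if "subgroup (snd (e k)) ?W" for k
      using x that unfolding H0_def by blast
    have "x \<in> S k" for k
      using xc xk[of k] unfolding S_def by simp
    then show "x \<in> \<Inter> (range S)" by blast
  next
    fix x assume x: "x \<in> \<Inter> (range S)"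
    have xS: "x \<in> S k" for k using x by (meson InterD rangeI)
    have "x \<in> ?C" using xS[of 0] SC[of 0] by blast
    moreover have "subgroup (snd (e k)) ?W \<longrightarrow> b k (fst (e k)) x \<in> snd (e k)" for k
    proof
      assume sg: "subgroup (snd (e k)) ?W"
      have "S k = {y \<in> ?C. b k (fst (e k)) y \<in> snd (e k)}"
        unfolding S_def using sg by (rule if_P)
      then show "b k (fst (e k)) x \<in> snd (e k)" using xS[of k] by blast
    qed
    ultimately show "x \<in> H0" unfolding H0_def by blast
  qed
  have sgS: "subgroup (S k) ?W" for k
  proof (cases "subgroup (snd (e k)) ?W")
    case True
    have "S k = {y \<in> ?C. b k (fst (e k)) y \<in> snd (e k)}"
      unfolding S_def using True by (rule if_P)
    then show ?thesis
      using preimage_subgroup[OF sel_group_hom[OF assms(1)] True] unfolding b_def by simp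
  next
    case False
    have "S k = ?C" unfolding S_def using False by (rule if_not_P)
    then show ?thesis using group.subgroup_self[OF gW] by simp
  qed
  have sgH0: "subgroup H0 ?W" unfolding H0S
    using subgroup_Inter[of "range S" ?W] sgS by auto
  have eP: "e k \<in> P" for k using rng by auto
  have clS: "closedin ?T (S k)" for k
  proof (cases "subgroup (snd (e k)) ?W")
    case True
    have sub: "snd (e k) \<subseteq> t (fst (e k)) ` ?C" using eP[of k] by (auto simp: P_def)
    have "finite (snd (e k))" using fin finite_subset[OF sub] by blast
    moreover have "snd (e k) \<subseteq> topspace ?T" using True subgroup.subset by (auto simp: topspace_omega)
    moreover have "Hausdorff_space ?T"
      by (simp add: omega_power_topology_def Hausdorff_space_product_topology)
    ultimately have "closedin ?T (snd (e k))" using closedin_Hausdorff_finite by blast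
    from closedin_continuous_map_preimage[OF sel_cont[OF assms(1)] this]
    have "closedin ?T {y \<in> topspace ?T. b k (fst (e k)) y \<in> snd (e k)}" unfolding b_def .
    moreover have "S k = {y \<in> topspace ?T. b k (fst (e k)) y \<in> snd (e k)}"
      unfolding S_def topspace_omega using True by (rule if_P)
    ultimately show ?thesis by simp
  next
    case False
    have "S k = topspace ?T" unfolding S_def topspace_omega using False by (rule if_not_P)
    then show ?thesis by simp
  qed
  have clH0: "closedin ?T H0" unfolding H0S
    by (rule closedin_Inter) (auto simp: clS)
  have univ: "\<exists>\<phi>. \<phi> \<in> hom ?W ?W \<and> continuous_map ?T ?T \<phi> \<and> {x \<in> ?C. \<phi> x \<in> H0} = H"
    if H: "subgroup H ?W" "closedin ?T H" for H
  proof -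
    define c where "c m = (let k = fst (prod_decode m); i = snd (prod_decode m) in
        snd (e k) = t (fst (e k)) ` H \<and> i < fst (e k))" for m
    define \<phi> where "\<phi> = sel \<one>\<^bsub>G\<^esub> (\<lambda>m. if c m then Some (snd (prod_decode m)) else None)"
    have HC: "H \<subseteq> ?C" using H(1) subgroup.subset by blast
    have sgt: "subgroup (t n ` H) ?W" for n
      using group_hom.subgroup_img_is_subgroup[OF sel_group_hom[OF assms(1)] H(1)] by (simp add: t_def)
    have phik: "\<phi> x (prod_encode (k,i)) = (if snd (e k) = t (fst (e k)) ` H \<and> i < fst (e k) then x i else \<one>\<^bsub>G\<^esub>)" for x k i
      by (simp add: \<phi>_def sel_def c_def Let_def)
    have bapp: "b k m y i = (if i < m then y (prod_encode (k,i)) else \<one>\<^bsub>G\<^esub>)" for k m y i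
      by (simp add: b_def sel_def)
    have tapp: "t m y i = (if i < m then y i else \<one>\<^bsub>G\<^esub>)" for m y i
      by (simp add: t_def sel_def)
    have bphi: "b k (fst (e k)) (\<phi> x) = (if snd (e k) = t (fst (e k)) ` H then t (fst (e k)) x else (\<lambda>i. \<one>\<^bsub>G\<^esub>))" for k x
    proof (cases "snd (e k) = t (fst (e k)) ` H")
      case True
      have "b k (fst (e k)) (\<phi> x) i = (if i < fst (e k) then x i else \<one>\<^bsub>G\<^esub>)" for i
        unfolding bapp phik using True by simp
      then have "b k (fst (e k)) (\<phi> x) i = t (fst (e k)) x i" for i
        by (simp only: tapp)
      then show ?thesis using True by auto
    next
      case False
      have "b k (fst (e k)) (\<phi> x) i = \<one>\<^bsub>G\<^esub>" for i
        unfolding bapp phik using False by simp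
      then show ?thesis using False by auto
    qed
    have one_in: "(\<lambda>i. \<one>\<^bsub>G\<^esub>) \<in> K" if "subgroup K ?W" for K
      using subgroup.one_closed[OF that] by (simp add: one_omega)
    have "{x \<in> ?C. \<phi> x \<in> H0} = H"
    proof (intro equalityI subsetI)
      fix x assume x: "x \<in> {x \<in> ?C. \<phi> x \<in> H0}"
      have xC: "x \<in> ?C" using x by auto
      have phC: "\<phi> x \<in> ?C" using xC hom_in_carrier[OF sel_hom[OF assms(1)]] by (simp add: \<phi>_def)
      have all: "t n x \<in> t n ` H" for n
      proof -
        have "(n, t n ` H) \<in> P" using HC by (auto simp: P_def)
        then obtain k where k: "e k = (n, t n ` H)" using rng by (metis rangeE)
        have "\<phi> x \<in> H0" using x by blast
        then have "subgroup (snd (e k)) ?W \<longrightarrow> b k (fst (e k)) (\<phi> x) \<in> snd (e k)"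
          unfolding H0_def by blast
        then have "b k (fst (e k)) (\<phi> x) \<in> snd (e k)" using sgt[of n] k by simp
        then show ?thesis using bphi[of k x] k by simp
      qed
      show "x \<in> H"
      proof (rule closed_approx[OF H(2) xC])
        fix n
        obtain h where h: "h \<in> H" "t n x = t n h" using all[of n] by auto
        have "\<forall>i<n. h i = x i"
        proof (intro allI impI)
          fix i assume "i < n"
          have "t n x i = t n h i" using h(2) by simp
          then show "h i = x i" using \<open>i < n\<close> by (simp add: t_def sel_def)
        qed
        then show "\<exists>h\<in>H. \<forall>i<n. h i = x i" using h(1) by blast
      qed
    next
      fix x assume xH: "x \<in> H"
      have xC: "x \<in> ?C" using xH HC by auto
      have phC: "\<phi> x \<in> ?C" using xC hom_in_carrier[OF sel_hom[OF assms(1)]] by (simp add: \<phi>_def)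
      have "\<phi> x \<in> H0" unfolding H0_def
      proof (intro CollectI conjI allI impI phC)
        fix k assume sk: "subgroup (snd (e k)) ?W"
        show "b k (fst (e k)) (\<phi> x) \<in> snd (e k)"
          using bphi[of k x] xH one_in[OF sk] by auto
      qed
      then show "x \<in> {x \<in> ?C. \<phi> x \<in> H0}" using xC by auto
    qed
    then show ?thesis using sel_hom[OF assms(1)] sel_cont[OF assms(1)] unfolding \<phi>_def by blast
  qed
  show ?thesis using sgH0 clH0 univ by blast
qed

end
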